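(* Let $(S,V)$ be a complete semiring-semimodule pair, let $n\ge1$, let $\Gamma$ be an alphabet, and let $M\in (S^{n\times n})^{\Gamma^*\times\Gamma^*}$ be a pushdown transition matrix. Then for all $k\ge1$, $p_1,\dots,p_k\in\Gamma$ and $0\le l\le n$, $$(M^{\omega,l})_{p_1\dots p_k}=\sum_{1\le j\le k}(M^* )_{p_1\dots p_{j-1},\epsilon}\,(M^{\omega,l})_{p_j}.$$
   Context: A complete semiring-semimodule pair $(S,V)$ (in the sense of Ésik and Kuich, "Modern Automata Theory") consists of a complete starsemiring $S$ (arbitrary sums with infinite associativity/commutativity/distributivity laws, star $s^*=\sum_{j\ge0}s^j$) and a complete $S$-semimodule $V$, with infinite products $\prod_{j\ge1}s_j\in V$ of sequences in $S$ satisfying the axioms of that framework. $M\in (S^{n\times n})^{\Gamma^*\times\Gamma^*}$ (a $\Gamma^*\times\Gamma^*$ matrix with $n\times n$ blocks over $S$) is a pushdown transition matrix if (i) for each $p\in\Gamma$ only finitely many blocks $M_{p,\pi}$ are nonzero, and (ii) $M_{\pi_1,\pi_2}=M_{p,\pi}$ if $\pi_1=p\pi'$, $\pi_2=\pi\pi'$ for some $p\in\Gamma$, $\pi,\pi'\in\Gamma^*$, and $0$ otherwise. $M^*=\sum_{m\ge0}M^m$ with blocks $(M^* )_{\pi,\pi'}$; $p_1\dots p_0=\epsilon$. Let $P_l=\{(j_1,j_2,\dots)\in\{1,\dots,n\}^\omega\mid j_t\le l\text{ for infinitely many }t\}$. Then $M^{\omega,l}\in (V^n)^{\Gamma^*}$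 is the column vector with $$((M^{\omega,l})_\pi)_i=\sum_{\pi_1,\pi_2,\ldots\in\Gamma^*}\ \sum_{(j_1,j_2,\ldots)\in P_l}(M_{\pi,\pi_1})_{i,j_1}(M_{\pi_1,\pi_2})_{j_1,j_2}(M_{\pi_2,\pi_3})_{j_2,j_3}\cdots,$$ i.e. the sum of weights of all infinite paths from $(\pi,i)$ in the graph on $\Gamma^*\times\{1,\dots,n\}$ with adjacency matrix $M$ that visit vertices $(\pi',i')$ with $i'\le l$ infinitely often. *)

theory Defs
  imports Main "HOL-Library.Countable" "HOL-Library.Nat_Bijection"
begin

text \<open>Complete sums are modelled by an operator summing a family over an index set of
  the universal index type idx = nat => nat (all index sets of cardinality at most the
  continuum). Families over other (countable or sequence) index types are transported
  into idx along an injection.\<close>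

type_synonym idx = "nat \<Rightarrow> nat"

definition gsum :: "((idx \<Rightarrow> 'b) \<Rightarrow> idx set \<Rightarrow> 'b) \<Rightarrow> ('i \<Rightarrow> idx) \<Rightarrow> ('i \<Rightarrow> 'b) \<Rightarrow> 'i set \<Rightarrow> 'b" where
  "gsum Sig e f I = Sig (\<lambda>u. f (inv_into I e u)) (e ` I)"

definition encseq :: "(nat \<Rightarrow> idx) \<Rightarrow> idx" where
  "encseq f = (\<lambda>k. f (fst (prod_decode k)) (snd (prod_decode k)))"

definition encc :: "'c::countable \<Rightarrow> idx" where
  "encc x = (\<lambda>_. to_nat x)"

definition encs :: "(nat \<Rightarrow> 'c::countable) \<Rightarrow> idx" where
  "encs q = (\<lambda>t. to_nat (q t))"

definition complete_monoid :: "((idx \<Rightarrow> 'b::comm_monoid_add) \<Rightarrow> idx set \<Rightarrow> 'b) \<Rightarrow> bool" where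
  "complete_monoid Sig \<longleftrightarrow>
     (\<forall>f I g. (\<forall>x\<in>I. f x = g x) \<longrightarrow> Sig f I = Sig g I) \<and>
     (\<forall>f. Sig f {} = 0) \<and>
     (\<forall>f x. Sig f {x} = f x) \<and>
     (\<forall>f x y. x \<noteq> y \<longrightarrow> Sig f {x, y} = f x + f y) \<and>
     (\<forall>f (J::idx set) (Is :: idx \<Rightarrow> idx set).
        (\<forall>j\<in>J. \<forall>j'\<in>J. j \<noteq> j' \<longrightarrow> Is j \<inter> Is j' = {}) \<longrightarrow>
        Sig (\<lambda>j. Sig f (Is j)) J = Sig f (\<Union>j\<in>J. Is j))"

text \<open>Complete semiring (a semiring with 0 and 1, not necessarily 0 ~= 1).\<close>
definition complete_semiring :: "((idx \<Rightarrow> 'a::{semiring_0,monoid_mult}) \<Rightarrow> idx set \<Rightarrow> 'a) \<Rightarrow> bool" where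
  "complete_semiring SigS \<longleftrightarrow> complete_monoid SigS \<and>
     (\<forall>c f I. SigS (\<lambda>i. c * f i) I = c * SigS f I) \<and>
     (\<forall>c f I. SigS (\<lambda>i. f i * c) I = SigS f I * c)"

definition complete_semimodule ::
  "((idx \<Rightarrow> 'a::{semiring_0,monoid_mult}) \<Rightarrow> idx set \<Rightarrow> 'a) \<Rightarrow>
   ((idx \<Rightarrow> 'v::comm_monoid_add) \<Rightarrow> idx set \<Rightarrow> 'v) \<Rightarrow> ('a \<Rightarrow> 'v \<Rightarrow> 'v) \<Rightarrow> bool" where
  "complete_semimodule SigS SigV smult \<longleftrightarrow> complete_monoid SigV \<and>
     (\<forall>s v1 v2. smult s (v1 + v2) = smult s v1 + smult s v2) \<and>
     (\<forall>s1 s2 v. smult (s1 + s2) v = smult s1 v + smult s2 v) \<and>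
     (\<forall>s1 s2 v. smult (s1 * s2) v = smult s1 (smult s2 v)) \<and>
     (\<forall>v. smult 1 v = v) \<and> (\<forall>v. smult 0 v = 0) \<and> (\<forall>s. smult s 0 = 0) \<and>
     (\<forall>s f I. SigV (\<lambda>i. smult s (f i)) I = smult s (SigV f I)) \<and>
     (\<forall>f I v. smult (SigS f I) v = SigV (\<lambda>i. smult (f i) v) I)"

text \<open>Complete semiring-semimodule pair with infinite product iprod (sequences indexed
  from 0, i.e. iprod s stands for s_0 s_1 s_2 ...).\<close>
definition complete_ssp ::
  "((idx \<Rightarrow> 'a::{semiring_0,monoid_mult}) \<Rightarrow> idx set \<Rightarrow> 'a) \<Rightarrow>
   ((idx \<Rightarrow> 'v::comm_monoid_add) \<Rightarrow> idx set \<Rightarrow> 'v) \<Rightarrow> ('a \<Rightarrow> 'v \<Rightarrow> 'v) \<Rightarrow>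
   ((nat \<Rightarrow> 'a) \<Rightarrow> 'v) \<Rightarrow> bool" where
  "complete_ssp SigS SigV smult iprod \<longleftrightarrow>
     complete_semiring SigS \<and> complete_semimodule SigS SigV smult \<and>
     (\<forall>s. iprod s = smult (s 0) (iprod (\<lambda>j. s (Suc j)))) \<and>
     (\<forall>s (m::nat \<Rightarrow> nat). strict_mono m \<and> m 0 = 0 \<longrightarrow>
        iprod s = iprod (\<lambda>j. prod_list (map s [m j..<m (Suc j)]))) \<and>
     (\<forall>(s :: nat \<Rightarrow> idx \<Rightarrow> 'a) (Is :: nat \<Rightarrow> idx set).
        iprod (\<lambda>j. SigS (s j) (Is j)) =
        gsum SigV encseq (\<lambda>f. iprod (\<lambda>j. s j (f j))) {f. \<forall>j. f j \<in> Is j})"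

text \<open>Pushdown transition matrices: M pi1 pi2 i j is entry (i,j) (1 <= i,j <= n) of block
  (pi1,pi2); stacks are lists whose head is the top symbol.\<close>
definition pushdown_tm :: "nat \<Rightarrow> ('g list \<Rightarrow> 'g list \<Rightarrow> nat \<Rightarrow> nat \<Rightarrow> 'a::zero) \<Rightarrow> bool" where
  "pushdown_tm n M \<longleftrightarrow>
     (\<forall>p. finite {\<pi>. \<exists>i\<in>{1..n}. \<exists>j\<in>{1..n}. M [p] \<pi> i j \<noteq> 0}) \<and>
     (\<forall>p \<pi> \<pi>'. \<forall>i\<in>{1..n}. \<forall>j\<in>{1..n}. M (p # \<pi>') (\<pi> @ \<pi>') i j = M [p] \<pi> i j) \<and>
     (\<forall>\<pi>1 \<pi>2. (\<nexists>p \<pi> \<pi>'. \<pi>1 = p # \<pi>' \<and> \<pi>2 = \<pi> @ \<pi>') \<longrightarrow>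
        (\<forall>i\<in>{1..n}. \<forall>j\<in>{1..n}. M \<pi>1 \<pi>2 i j = 0))"

definition mat_mult :: "((idx \<Rightarrow> 'a::{semiring_0,monoid_mult}) \<Rightarrow> idx set \<Rightarrow> 'a) \<Rightarrow> nat \<Rightarrow>
   ('g::countable list \<Rightarrow> 'g list \<Rightarrow> nat \<Rightarrow> nat \<Rightarrow> 'a) \<Rightarrow> ('g list \<Rightarrow> 'g list \<Rightarrow> nat \<Rightarrow> nat \<Rightarrow> 'a) \<Rightarrow>
   'g list \<Rightarrow> 'g list \<Rightarrow> nat \<Rightarrow> nat \<Rightarrow> 'a" where
  "mat_mult SigS n A B \<pi>1 \<pi>2 i j =
     gsum SigS encc (\<lambda>(\<pi>, k). A \<pi>1 \<pi> i k * B \<pi> \<pi>2 k j) (UNIV \<times> {1..n})"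

primrec mat_pow :: "((idx \<Rightarrow> 'a::{semiring_0,monoid_mult}) \<Rightarrow> idx set \<Rightarrow> 'a) \<Rightarrow> nat \<Rightarrow>
   ('g::countable list \<Rightarrow> 'g list \<Rightarrow> nat \<Rightarrow> nat \<Rightarrow> 'a) \<Rightarrow> nat \<Rightarrow>
   'g list \<Rightarrow> 'g list \<Rightarrow> nat \<Rightarrow> nat \<Rightarrow> 'a" where
  "mat_pow SigS n M 0 = (\<lambda>\<pi>1 \<pi>2 i j. if \<pi>1 = \<pi>2 \<and> i = j then 1 else 0)"
| "mat_pow SigS n M (Suc m) = mat_mult SigS n (mat_pow SigS n M m) M"

definition mat_star :: "((idx \<Rightarrow> 'a::{semiring_0,monoid_mult}) \<Rightarrow> idx set \<Rightarrow> 'a) \<Rightarrow> nat \<Rightarrow>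
   ('g::countable list \<Rightarrow> 'g list \<Rightarrow> nat \<Rightarrow> nat \<Rightarrow> 'a) \<Rightarrow>
   'g list \<Rightarrow> 'g list \<Rightarrow> nat \<Rightarrow> nat \<Rightarrow> 'a" where
  "mat_star SigS n M \<pi>1 \<pi>2 i j = gsum SigS encc (\<lambda>m. mat_pow SigS n M m \<pi>1 \<pi>2 i j) UNIV"

text \<open>M^{omega,l}: q t = (pi_{t+1}, j_{t+1}); the path starts at (pi, i).\<close>
definition omega_l :: "((idx \<Rightarrow> 'v::comm_monoid_add) \<Rightarrow> idx set \<Rightarrow> 'v) \<Rightarrow> ((nat \<Rightarrow> 'a) \<Rightarrow> 'v) \<Rightarrow>
   nat \<Rightarrow> ('g::countable list \<Rightarrow> 'g list \<Rightarrow> nat \<Rightarrow> nat \<Rightarrow> 'a) \<Rightarrow> nat \<Rightarrow> 'g list \<Rightarrow> nat \<Rightarrow> 'v" where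
  "omega_l SigV iprod n M l \<pi> i =
     gsum SigV encs
       (\<lambda>q. let vtx = (\<lambda>t. if t = 0 then (\<pi>, i) else q (t - 1)) in
            iprod (\<lambda>t. M (fst (vtx t)) (fst (vtx (Suc t))) (snd (vtx t)) (snd (vtx (Suc t)))))
       {q. (\<forall>t. snd (q t) \<in> {1..n}) \<and> infinite {t. snd (q t) \<le> l}}"

end

theory Submission
  imports Defs "HOL-Library.Infinite_Set"
begin



lemma cm_D1:
  assumes "complete_monoid Sig"
  shows "\<forall>f I g. (\<forall>x\<in>I. f x = g x) \<longrightarrow> Sig f I = Sig g I"
  using assms unfolding complete_monoid_def by (elim conjE) assumption

lemma cm_D2:
  assumes "complete_monoid Sig"
  shows "\<forall>f. Sig f {} = 0"
  using assms unfolding complete_monoid_def by (elim conjE) assumption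

lemma cm_D3:
  assumes "complete_monoid Sig"
  shows "\<forall>f x. Sig f {x} = f x"
  using assms unfolding complete_monoid_def by (elim conjE) assumption

lemma cm_D4:
  assumes "complete_monoid Sig"
  shows "\<forall>f x y. x \<noteq> y \<longrightarrow> Sig f {x, y} = f x + f y"
  using assms unfolding complete_monoid_def by (elim conjE) assumption

lemma cm_D5:
  assumes "complete_monoid Sig"
  shows "\<forall>f (J::idx set) (Is :: idx \<Rightarrow> idx set).
        (\<forall>j\<in>J. \<forall>j'\<in>J. j \<noteq> j' \<longrightarrow> Is j \<inter> Is j' = {}) \<longrightarrow>
        Sig (\<lambda>j. Sig f (Is j)) J = Sig f (\<Union>j\<in>J. Is j)"
  using assms unfolding complete_monoid_def by (elim conjE) assumption

lemmas cm_D = cm_D1 cm_D2 cm_D3 cm_D4 cm_D5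


lemma cm_cong: "complete_monoid Sig \<Longrightarrow> (\<And>x. x\<in>I \<Longrightarrow> f x = g x) \<Longrightarrow> Sig f I = Sig g I"
  using cm_D(1) by blast
lemma cm_empty: "complete_monoid Sig \<Longrightarrow> Sig f {} = 0"
  using cm_D(2) by blast
lemma cm_single: "complete_monoid Sig \<Longrightarrow> Sig f {x} = f x"
  using cm_D(3) by blast
lemma cm_pair: "complete_monoid Sig \<Longrightarrow> x \<noteq> y \<Longrightarrow> Sig f {x,y} = f x + f y"
  using cm_D(4) by blast
lemma cm_part: "complete_monoid Sig \<Longrightarrow> (\<And>j j'. j\<in>J \<Longrightarrow> j'\<in>J \<Longrightarrow> j \<noteq> j' \<Longrightarrow> Is j \<inter> Is j' = {})
   \<Longrightarrow> Sig (\<lambda>j. Sig f (Is j)) J = Sig f (\<Union>j\<in>J. Is j)"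
proof -
  assume a: "complete_monoid Sig" and d: "(\<And>j j'. j\<in>J \<Longrightarrow> j'\<in>J \<Longrightarrow> j \<noteq> j' \<Longrightarrow> Is j \<inter> Is j' = {})"
  have "\<forall>j\<in>J. \<forall>j'\<in>J. j \<noteq> j' \<longrightarrow> Is j \<inter> Is j' = {}" using d by blast
  then show ?thesis using cm_D(5)[OF a] by blast
qed

lemma cm_reindex:
  assumes cm: "complete_monoid Sig" and inj: "inj_on h I"
  shows "Sig f (h ` I) = Sig (f \<circ> h) I"
proof -
  have "Sig (\<lambda>j. Sig f {h j}) I = Sig f (\<Union>j\<in>I. {h j})"
    by (rule cm_part[OF cm]) (use inj in \<open>auto simp: inj_on_def\<close>)
  moreover have "Sig (\<lambda>j. Sig f {h j}) I = Sig (f \<circ> h) I"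
    by (rule cm_cong[OF cm]) (simp add: cm_single[OF cm])
  ultimately show ?thesis by (simp add: image_def) (metis (no_types) UNION_singleton_eq_range image_def)
qed

lemma gsum_cong:
  assumes a: "\<And>x. x\<in>I \<Longrightarrow> f x = g x" and cm: "complete_monoid Sig"
  shows "gsum Sig e f I = gsum Sig e g I"
  unfolding gsum_def
proof (rule cm_cong[OF cm])
  fix u assume "u \<in> e ` I"
  then have "inv_into I e u \<in> I" by (simp add: inv_into_into)
  then show "f (inv_into I e u) = g (inv_into I e u)" using a by blast
qed

lemma gsum_enc:
  assumes cm: "complete_monoid Sig" and i1: "inj_on e1 I" and i2: "inj_on e2 I"
  shows "gsum Sig e1 f I = gsum Sig e2 f I"
proof -
  define h where "h = e2 \<circ> inv_into I e1"
  have ih: "inj_on h (e1 ` I)" unfolding h_def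
  proof (rule comp_inj_on)
    show "inj_on (inv_into I e1) (e1 ` I)" by (rule inj_on_inv_into) simp
    have "inv_into I e1 ` e1 ` I = I" by (rule inv_into_image_cancel[OF i1]) simp
    then show "inj_on e2 (inv_into I e1 ` e1 ` I)" using i2 by simp
  qed
  have im: "h ` (e1 ` I) = e2 ` I" unfolding h_def using i1 by (auto simp: image_iff)
  have "gsum Sig e2 f I = Sig (\<lambda>u. f (inv_into I e2 u)) (h ` (e1 ` I))" unfolding gsum_def im ..
  also have "\<dots> = Sig ((\<lambda>u. f (inv_into I e2 u)) \<circ> h) (e1 ` I)" by (rule cm_reindex[OF cm ih])
  also have "\<dots> = gsum Sig e1 f I" unfolding gsum_def
    by (rule cm_cong[OF cm]) (auto simp: h_def inv_into_f_f i1 i2 inv_into_into)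
  finally show ?thesis ..
qed

lemma gsum_reindex:
  assumes cm: "complete_monoid Sig" and ih: "inj_on h I" and ie: "inj_on e (h ` I)"
  shows "gsum Sig e f (h ` I) = gsum Sig (e \<circ> h) (f \<circ> h) I"
proof -
  have ieh: "inj_on (e \<circ> h) I" using ih ie by (rule comp_inj_on)
  have 1: "e ` h ` I = (e \<circ> h) ` I" by auto
  show ?thesis unfolding gsum_def 1
  proof (rule cm_cong[OF cm])
    fix u assume "u \<in> (e \<circ> h) ` I"
    then obtain x where x: "x \<in> I" "u = e (h x)" by auto
    have a: "inv_into (h ` I) e u = h x" using x ie by (simp add: inv_into_f_f)
    have b: "inv_into I (e \<circ> h) u = x" using x ieh inv_into_f_f[OF ieh x(1)] by simp
    show "f (inv_into (h ` I) e u) = (f \<circ> h) (inv_into I (e \<circ> h) u)" using a b by simp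
  qed
qed

lemma gsum_part:
  assumes cm: "complete_monoid Sig" and iJ: "inj_on eJ J" and ie: "inj_on e (\<Union>j\<in>J. Is j)"
    and dis: "\<And>j j'. j\<in>J \<Longrightarrow> j'\<in>J \<Longrightarrow> j \<noteq> j' \<Longrightarrow> Is j \<inter> Is j' = {}"
  shows "gsum Sig eJ (\<lambda>j. gsum Sig e f (Is j)) J = gsum Sig e f (\<Union>j\<in>J. Is j)"
proof -
  define U where "U = (\<Union>j\<in>J. Is j)"
  define f' where "f' = (\<lambda>u. f (inv_into U e u))"
  define Is' where "Is' = (\<lambda>u. e ` Is (inv_into J eJ u))"
  have inner: "gsum Sig e f (Is j) = Sig f' (e ` Is j)" if "j \<in> J" for j
    unfolding gsum_def
  proof (rule cm_cong[OF cm])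
    fix u assume "u \<in> e ` Is j"
    then obtain x where x: "x \<in> Is j" "u = e x" by auto
    have xU: "x \<in> U" using x that U_def by auto
    have iIs: "inj_on e (Is j)" by (rule inj_on_subset[OF ie]) (use that in auto)
    show "f (inv_into (Is j) e u) = f' u" unfolding f'_def using x xU iIs ie U_def
      by (simp add: inv_into_f_f)
  qed
  have "gsum Sig eJ (\<lambda>j. gsum Sig e f (Is j)) J = Sig (\<lambda>u. Sig f' (Is' u)) (eJ ` J)"
    unfolding gsum_def Is'_def by (rule cm_cong[OF cm]) (auto simp: inner[unfolded gsum_def] inv_into_into inv_into_f_f iJ)
  also have "\<dots> = Sig f' (\<Union>u\<in>eJ ` J. Is' u)"
  proof (rule cm_part[OF cm])
    fix u u' assume u: "u \<in> eJ ` J" "u' \<in> eJ ` J" "u \<noteq> u'"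
    then obtain j j' where jj: "j\<in>J" "j'\<in>J" "u = eJ j" "u' = eJ j'" by auto
    have "j \<noteq> j'" using u jj by auto
    then have d: "Is j \<inter> Is j' = {}" using dis jj by auto
    have "e ` Is j \<inter> e ` Is j' = {}"
    proof -
      have "e ` Is j \<inter> e ` Is j' = e ` (Is j \<inter> Is j')"
        by (rule inj_on_image_Int[OF ie, symmetric]) (use jj in auto)
      then show ?thesis using d by simp
    qed
    then show "Is' u \<inter> Is' u' = {}" unfolding Is'_def using jj iJ by (simp add: inv_into_f_f)
  qed
  also have "(\<Union>u\<in>eJ ` J. Is' u) = e ` U" unfolding Is'_def U_def using iJ by (auto simp: inv_into_f_f)
  also have "Sig f' (e ` U) = gsum Sig e f U" unfolding gsum_def f'_def ..
  finally show ?thesis unfolding U_def .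
qed

lemma gsum_zero:
  assumes cm: "complete_monoid Sig" and z: "\<And>x. x\<in>I \<Longrightarrow> f x = 0"
  shows "gsum Sig e f I = 0"
proof -
  have "Sig (\<lambda>u. f (inv_into I e u)) (e ` I) = Sig (\<lambda>u. Sig (\<lambda>_. 0) {}) (e ` I)"
    by (rule cm_cong[OF cm]) (simp add: z inv_into_into cm_empty[OF cm, of "\<lambda>_. 0"])
  also have "\<dots> = Sig (\<lambda>_. 0) (\<Union>u\<in>e ` I. {})" by (rule cm_part[OF cm]) auto
  also have "\<dots> = 0" by (simp add: cm_empty[OF cm])
  finally show ?thesis unfolding gsum_def .
qed

lemma gsum_single: "complete_monoid Sig \<Longrightarrow> gsum Sig e f {x} = f x"
  unfolding gsum_def by (simp add: cm_single)

lemma gsum_empty: "complete_monoid Sig \<Longrightarrow> gsum Sig e f {} = 0"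
  unfolding gsum_def by (simp add: cm_empty)

lemma gsum_union:
  assumes cm: "complete_monoid Sig" and ie: "inj_on e (A \<union> B)" and d: "A \<inter> B = {}"
  shows "gsum Sig e f (A \<union> B) = gsum Sig e f A + gsum Sig e f B"
proof -
  define Is where "Is = (\<lambda>b::bool. if b then A else B)"
  define eb where "eb = (\<lambda>b::bool. (\<lambda>_::nat. if b then (1::nat) else 0))"
  have ieb: "inj_on eb UNIV" unfolding eb_def inj_on_def by (metis zero_neq_one)
  have u: "(\<Union>j\<in>UNIV. Is j) = A \<union> B" unfolding Is_def by auto
  have "gsum Sig eb (\<lambda>j. gsum Sig e f (Is j)) UNIV = gsum Sig e f (\<Union>j\<in>UNIV. Is j)"
    by (rule gsum_part[OF cm]) (use ieb ie d u in \<open>auto simp: Is_def\<close>)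
  moreover have "gsum Sig eb (\<lambda>j. gsum Sig e f (Is j)) UNIV = gsum Sig e f A + gsum Sig e f B"
  proof -
    have U: "eb ` UNIV = {eb True, eb False}" by (auto simp: UNIV_bool)
    have ne: "eb True \<noteq> eb False" unfolding eb_def by (metis zero_neq_one)
    show ?thesis unfolding gsum_def[of Sig eb] U cm_pair[OF cm ne]
      using ieb by (simp add: Is_def inv_into_f_f gsum_def)
  qed
  ultimately show ?thesis using u by simp
qed

lemma gsum_finite:
  assumes cm: "complete_monoid Sig" and fin: "finite I" and ie: "inj_on e I"
  shows "gsum Sig e f I = sum f I"
  using fin ie
proof (induction I rule: finite_induct)
  case empty then show ?case by (simp add: gsum_empty[OF cm])
next
  case (insert x F)
  have "gsum Sig e f ({x} \<union> F) = gsum Sig e f {x} + gsum Sig e f F"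
    by (rule gsum_union[OF cm]) (use insert in auto)
  then show ?case using insert by (simp add: gsum_single[OF cm] inj_on_subset)
qed

lemma gsum_subset:
  assumes cm: "complete_monoid Sig" and sub: "B \<subseteq> A" and ie: "inj_on e A"
    and z: "\<And>x. x \<in> A - B \<Longrightarrow> f x = 0"
  shows "gsum Sig e f A = gsum Sig e f B"
proof -
  have A: "A = B \<union> (A - B)" using sub by auto
  have "gsum Sig e f A = gsum Sig e f B + gsum Sig e f (A - B)"
    by (subst A, rule gsum_union[OF cm]) (use ie A in auto)
  moreover have "gsum Sig e f (A - B) = 0" by (rule gsum_zero[OF cm]) (rule z)
  ultimately show ?thesis by simp
qed




lemma ssp_D1:
  assumes "complete_ssp SigS SigV smult iprod"
  shows "complete_semiring SigS"
  using assms unfolding complete_ssp_def by (elim conjE) assumption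

lemma ssp_D2:
  assumes "complete_ssp SigS SigV smult iprod"
  shows "complete_semimodule SigS SigV smult"
  using assms unfolding complete_ssp_def by (elim conjE) assumption

lemma ssp_D3:
  assumes "complete_ssp SigS SigV smult iprod"
  shows "\<forall>s. iprod s = smult (s 0) (iprod (\<lambda>j. s (Suc j)))"
  using assms unfolding complete_ssp_def by (elim conjE) assumption

lemmas ssp_D = ssp_D1 ssp_D2 ssp_D3


lemma sm_D1:
  assumes "complete_semimodule SigS SigV smult"
  shows "complete_monoid SigV"
  using assms unfolding complete_semimodule_def by (elim conjE) assumption

lemma sm_D2:
  assumes "complete_semimodule SigS SigV smult"
  shows "\<forall>s v1 v2. smult s (v1 + v2) = smult s v1 + smult s v2"
  using assms unfolding complete_semimodule_def by (elim conjE) assumption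

lemma sm_D3:
  assumes "complete_semimodule SigS SigV smult"
  shows "\<forall>s1 s2 v. smult (s1 + s2) v = smult s1 v + smult s2 v"
  using assms unfolding complete_semimodule_def by (elim conjE) assumption

lemma sm_D4:
  assumes "complete_semimodule SigS SigV smult"
  shows "\<forall>s1 s2 v. smult (s1 * s2) v = smult s1 (smult s2 v)"
  using assms unfolding complete_semimodule_def by (elim conjE) assumption

lemma sm_D5:
  assumes "complete_semimodule SigS SigV smult"
  shows "\<forall>v. smult 1 v = v"
  using assms unfolding complete_semimodule_def by (elim conjE) assumption

lemma sm_D6:
  assumes "complete_semimodule SigS SigV smult"
  shows "\<forall>v. smult 0 v = 0"
  using assms unfolding complete_semimodule_def by (elim conjE) assumption

lemma sm_D7:
  assumes "complete_semimodule SigS SigV smult"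
  shows "\<forall>s. smult s 0 = 0"
  using assms unfolding complete_semimodule_def by (elim conjE) assumption

lemma sm_D8:
  assumes "complete_semimodule SigS SigV smult"
  shows "\<forall>s f I. SigV (\<lambda>i. smult s (f i)) I = smult s (SigV f I)"
  using assms unfolding complete_semimodule_def by (elim conjE) assumption

lemma sm_D9:
  assumes "complete_semimodule SigS SigV smult"
  shows "\<forall>f I v. smult (SigS f I) v = SigV (\<lambda>i. smult (f i) v) I"
  using assms unfolding complete_semimodule_def by (elim conjE) assumption

lemmas sm_D = sm_D1 sm_D2 sm_D3 sm_D4 sm_D5 sm_D6 sm_D7 sm_D8 sm_D9


lemma sr_D1:
  assumes "complete_semiring SigS"
  shows "complete_monoid SigS"
  using assms unfolding complete_semiring_def by (elim conjE) assumption

lemma sr_D2: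
  assumes "complete_semiring SigS"
  shows "\<forall>c f I. SigS (\<lambda>i. c * f i) I = c * SigS f I"
  using assms unfolding complete_semiring_def by (elim conjE) assumption

lemma sr_D3:
  assumes "complete_semiring SigS"
  shows "\<forall>c f I. SigS (\<lambda>i. f i * c) I = SigS f I * c"
  using assms unfolding complete_semiring_def by (elim conjE) assumption

lemmas sr_D = sr_D1 sr_D2 sr_D3


lemma ssp_parts:
  assumes a: "complete_ssp SigS SigV smult iprod"
  shows "complete_monoid SigS" "complete_monoid SigV"
    "\<And>c f I. SigS (\<lambda>i. f i * c) I = SigS f I * c"
    "\<And>s v. smult s (v1 + v2) = smult s v1 + smult s v2"
    "\<And>s1 s2 v. smult (s1 * s2) v = smult s1 (smult s2 v)"
    "\<And>v. smult 1 v = v" "\<And>v. smult 0 v = 0" "\<And>s. smult s 0 = 0"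
    "\<And>s f I. SigV (\<lambda>i. smult s (f i)) I = smult s (SigV f I)"
    "\<And>f I v. smult (SigS f I) v = SigV (\<lambda>i. smult (f i) v) I"
    "\<And>s. iprod s = smult (s 0) (iprod (\<lambda>j. s (Suc j)))"
proof -
  have sr: "complete_semiring SigS" and sm: "complete_semimodule SigS SigV smult" using ssp_D[OF a] by auto
  show "complete_monoid SigS" using sr_D(1)[OF sr] .
  show "complete_monoid SigV" using sm_D(1)[OF sm] .
  show "\<And>c f I. SigS (\<lambda>i. f i * c) I = SigS f I * c" using sr_D(3)[OF sr] by blast
  show "\<And>s v. smult s (v1 + v2) = smult s v1 + smult s v2" using sm_D(2)[OF sm] by blast
  show "\<And>s1 s2 v. smult (s1 * s2) v = smult s1 (smult s2 v)" using sm_D(4)[OF sm] by blast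
  show "\<And>v. smult 1 v = v" using sm_D(5)[OF sm] by blast
  show "\<And>v. smult 0 v = 0" using sm_D(6)[OF sm] by blast
  show "\<And>s. smult s 0 = 0" using sm_D(7)[OF sm] by blast
  show "\<And>s f I. SigV (\<lambda>i. smult s (f i)) I = smult s (SigV f I)" using sm_D(8)[OF sm] by blast
  show "\<And>f I v. smult (SigS f I) v = SigV (\<lambda>i. smult (f i) v) I" using sm_D(9)[OF sm] by blast
  show "\<And>s. iprod s = smult (s 0) (iprod (\<lambda>j. s (Suc j)))" using ssp_D(3)[OF a] by blast
qed

lemma iprod_factor:
  assumes ssp: "complete_ssp SigS SigV smult iprod"
  shows "iprod s = smult (prod_list (map s [0..<m])) (iprod (\<lambda>t. s (t + m)))"
proof (induction m)
  case 0 then show ?case using ssp_parts(6)[OF ssp] by simp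
next
  case (Suc m)
  have "iprod (\<lambda>t. s (t + m)) = smult (s m) (iprod (\<lambda>t. s (t + Suc m)))"
    using ssp_parts(11)[OF ssp, of "\<lambda>t. s (t + m)"] by simp
  then show ?case using Suc ssp_parts(5)[OF ssp] by simp
qed

lemma iprod_zero:
  assumes ssp: "complete_ssp SigS SigV smult iprod" and z: "s t = 0"
  shows "iprod s = 0"
proof -
  have "iprod (\<lambda>u. s (u + t)) = smult (s t) (iprod (\<lambda>u. s (Suc u + t)))"
    using ssp_parts(11)[OF ssp, of "\<lambda>u. s (u + t)"] by simp
  then have "iprod (\<lambda>u. s (u + t)) = 0" using z ssp_parts(7)[OF ssp] by simp
  then show ?thesis using iprod_factor[OF ssp, of s t] ssp_parts(8)[OF ssp] by simp
qed

type_synonym 'g vx = "'g list \<times> nat"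

definition ew :: "('g list \<Rightarrow> 'g list \<Rightarrow> nat \<Rightarrow> nat \<Rightarrow> 'a) \<Rightarrow> 'g vx \<Rightarrow> 'g vx \<Rightarrow> 'a" where
  "ew M v w = M (fst v) (fst w) (snd v) (snd w)"

fun wt :: "('g list \<Rightarrow> 'g list \<Rightarrow> nat \<Rightarrow> nat \<Rightarrow> 'a::monoid_mult) \<Rightarrow> 'g vx \<Rightarrow> 'g vx list \<Rightarrow> 'a" where
  "wt M v [] = 1"
| "wt M v (x # xs) = ew M v x * wt M x xs"

definition vtx :: "'g vx \<Rightarrow> (nat \<Rightarrow> 'g vx) \<Rightarrow> nat \<Rightarrow> 'g vx" where
  "vtx v q t = (if t = 0 then v else q (t - 1))"

definition W :: "((nat \<Rightarrow> 'a) \<Rightarrow> 'v) \<Rightarrow> ('g list \<Rightarrow> 'g list \<Rightarrow> nat \<Rightarrow> nat \<Rightarrow> 'a) \<Rightarrow> 'g vx \<Rightarrow> (nat \<Rightarrow> 'g vx) \<Rightarrow> 'v" where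
  "W iprod M v q = iprod (\<lambda>t. ew M (vtx v q t) (vtx v q (Suc t)))"

definition Qset :: "nat \<Rightarrow> nat \<Rightarrow> (nat \<Rightarrow> 'g vx) set" where
  "Qset n l = {q. (\<forall>t. snd (q t) \<in> {1..n}) \<and> infinite {t. snd (q t) \<le> l}}"

lemma omega_eq: "omega_l SigV iprod n M l \<pi> i = gsum SigV encs (W iprod M (\<pi>, i)) (Qset n l)"
  unfolding omega_l_def W_def Qset_def vtx_def ew_def Let_def by simp

definition P :: "nat \<Rightarrow> nat \<Rightarrow> 'g vx \<Rightarrow> 'g vx \<Rightarrow> 'g vx list set" where
  "P n m v w = {xs. length xs = m \<and> last (v # xs) = w \<and> (\<forall>x\<in>set (butlast (v # xs)). snd x \<in> {1..n})}"

lemma wt_snoc: "wt M v (xs @ [w]) = wt M v xs * ew M (last (v # xs)) w"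
  by (induction xs arbitrary: v) (auto simp: mult.assoc)

lemma inj_encc: "inj_on encc A"
  unfolding inj_on_def encc_def by (metis to_nat_split)

lemma inj_encs: "inj_on encs A"
  unfolding inj_on_def encs_def by (metis ext to_nat_split)

lemma mat_pow_paths:
  fixes M :: "'g::countable list \<Rightarrow> 'g list \<Rightarrow> nat \<Rightarrow> nat \<Rightarrow> 'a::{semiring_0,monoid_mult}"
  assumes sr: "complete_semiring SigS"
  shows "mat_pow SigS n M m \<pi>1 \<pi>2 a b = gsum SigS encc (wt M (\<pi>1, a)) (P n m (\<pi>1, a) (\<pi>2, b))"
proof (induction m arbitrary: \<pi>2 b)
  have cm: "complete_monoid SigS" using sr_D(1)[OF sr] .
  case 0
  show ?case
  proof (cases "\<pi>1 = \<pi>2 \<and> a = b")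
    case True
    then have "P n 0 (\<pi>1, a) (\<pi>2, b) = {[]}" by (auto simp: P_def)
    then show ?thesis using True by (simp add: gsum_single[OF cm])
  next
    case False
    then have "P n 0 (\<pi>1, a) (\<pi>2, b) = {}" by (auto simp: P_def)
    then show ?thesis using False by (auto simp: gsum_empty[OF cm])
  qed
next
  have cm: "complete_monoid SigS" using sr_D(1)[OF sr] .
  have rd: "\<And>c f I. SigS (\<lambda>i. f i * c) I = SigS f I * c" using sr_D(3)[OF sr] by blast
  case (Suc m)
  define v where "v = (\<pi>1, a)"
  define w where "w = (\<pi>2, b)"
  define ap where "ap = (\<lambda>xs. xs @ [w])"
  have "mat_pow SigS n M (Suc m) \<pi>1 \<pi>2 a b =
     gsum SigS encc (\<lambda>(\<pi>, k). mat_pow SigS n M m \<pi>1 \<pi> a k * M \<pi> \<pi>2 k b) (UNIV \<times> {1..n})"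
    by (simp add: mat_mult_def)
  also have "\<dots> = gsum SigS encc (\<lambda>u. gsum SigS encc (wt M v) (ap ` P n m v u)) (UNIV \<times> {1..n})"
  proof (rule gsum_cong[OF _ cm])
    fix u :: "'g list \<times> nat" assume "u \<in> UNIV \<times> {1..n}"
    obtain \<pi> k where u: "u = (\<pi>, k)" by force
    have "gsum SigS encc (wt M v) (ap ` P n m v u) = gsum SigS (encc \<circ> ap) (wt M v \<circ> ap) (P n m v u)"
      by (rule gsum_reindex[OF cm]) (auto simp: ap_def inj_on_def dest: inj_onD[OF inj_encc[of UNIV]])
    also have "\<dots> = gsum SigS encc (wt M v \<circ> ap) (P n m v u)"
      by (rule gsum_enc[OF cm]) (auto simp: ap_def inj_on_def inj_encc encc_def fun_eq_iff)
    also have "\<dots> = gsum SigS encc (\<lambda>xs. wt M v xs * M \<pi> \<pi>2 k b) (P n m v u)"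
      by (rule gsum_cong[OF _ cm]) (auto simp: ap_def wt_snoc P_def u ew_def w_def)
    also have "\<dots> = gsum SigS encc (wt M v) (P n m v u) * M \<pi> \<pi>2 k b"
      unfolding gsum_def by (rule rd)
    finally have eq: "gsum SigS encc (wt M v) (P n m v u) * M \<pi> \<pi>2 k b = gsum SigS encc (wt M v) (ap ` P n m v u)" ..
    show "(case u of (\<pi>, k) \<Rightarrow> mat_pow SigS n M m \<pi>1 \<pi> a k * M \<pi> \<pi>2 k b) =
         gsum SigS encc (wt M v) (ap ` P n m v u)"
      using eq Suc.IH[of \<pi> k] by (simp add: u v_def)
  qed
  also have "\<dots> = gsum SigS encc (wt M v) (\<Union>u\<in>UNIV \<times> {1..n}. ap ` P n m v u)"
    by (rule gsum_part[OF cm]) (auto simp: inj_encc ap_def P_def)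
  also have "(\<Union>u\<in>UNIV \<times> {1..n}. ap ` P n m v u) = P n (Suc m) v w"
  proof (rule set_eqI, rule iffI)
    fix ys assume "ys \<in> (\<Union>u\<in>UNIV \<times> {1..n}. ap ` P n m v u)"
    then obtain u xs where u: "u \<in> UNIV \<times> {1..n}" "xs \<in> P n m v u" "ys = xs @ [w]"
      by (auto simp: ap_def)
    have L: "last (v#xs) = u" "\<forall>x\<in>set(butlast(v#xs)). snd x\<in>{1..n}" "length xs = m"
      using u(2) by (auto simp: P_def)
    have e: "v # xs = butlast (v#xs) @ [last (v#xs)]" by (rule append_butlast_last_id[symmetric]) simp
    have "\<forall>x\<in>set (v # xs). snd x \<in> {1..n}"
    proof
      fix x assume "x \<in> set (v # xs)"
      then have "x \<in> set (butlast (v#xs) @ [last (v#xs)])" using e by metis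
      then show "snd x \<in> {1..n}" using L u(1) by auto
    qed
    then show "ys \<in> P n (Suc m) v w" using L u(3) by (simp add: P_def butlast_append)
  next
    fix ys assume ys: "ys \<in> P n (Suc m) v w"
    have ne: "ys \<noteq> []" using ys by (auto simp: P_def)
    have lw: "last ys = w" using ys ne by (simp add: P_def)
    define xs where "xs = butlast ys"
    have xs: "ys = xs @ [w]" using ne lw xs_def by (metis append_butlast_last_id)
    have st: "\<forall>x\<in>set (v # xs). snd x \<in> {1..n}" using ys xs by (simp add: P_def butlast_append)
    define u where "u = last (v # xs)"
    have "u \<in> set (v # xs)" unfolding u_def by (rule last_in_set) simp
    then have "u \<in> UNIV \<times> {1..n}" using st by (metis SigmaI UNIV_I prod.collapse)
    moreover have "xs \<in> P n m v u"
    proof -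
      have "length xs = m" using ys xs by (simp add: P_def)
      moreover have "\<forall>x\<in>set (butlast (v#xs)). snd x \<in> {1..n}" using st by (meson in_set_butlastD)
      ultimately show ?thesis by (simp add: P_def u_def)
    qed
    ultimately show "ys \<in> (\<Union>u\<in>UNIV \<times> {1..n}. ap ` P n m v u)" using xs ap_def by blast
  qed
  finally show ?case by (simp add: v_def w_def)
qed




definition Pstar :: "nat \<Rightarrow> 'g vx \<Rightarrow> 'g vx \<Rightarrow> 'g vx list set" where
  "Pstar n v w = {xs. last (v # xs) = w \<and> (\<forall>x\<in>set (butlast (v # xs)). snd x \<in> {1..n})}"

lemma mat_star_paths:
  assumes sr: "complete_semiring SigS"
  shows "mat_star SigS n M \<pi>1 \<pi>2 a b = gsum SigS encc (wt M (\<pi>1, a)) (Pstar n (\<pi>1, a) (\<pi>2, b))"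
proof -
  have cm: "complete_monoid SigS" using sr_D(1)[OF sr] .
  have "mat_star SigS n M \<pi>1 \<pi>2 a b = gsum SigS encc (\<lambda>m. gsum SigS encc (wt M (\<pi>1, a)) (P n m (\<pi>1, a) (\<pi>2, b))) UNIV"
    unfolding mat_star_def by (rule gsum_cong[OF _ cm]) (simp add: mat_pow_paths[OF sr])
  also have "\<dots> = gsum SigS encc (wt M (\<pi>1, a)) (\<Union>m\<in>UNIV. P n m (\<pi>1, a) (\<pi>2, b))"
    by (rule gsum_part[OF cm]) (auto simp: inj_encc P_def)
  also have "(\<Union>m\<in>UNIV. P n m (\<pi>1, a) (\<pi>2, b)) = Pstar n (\<pi>1, a) (\<pi>2, b)"
    by (auto simp: P_def Pstar_def)
  finally show ?thesis .
qed

definition valid :: "'g list \<Rightarrow> 'g list \<Rightarrow> bool" where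
  "valid a b \<longleftrightarrow> a \<noteq> [] \<and> (\<exists>\<pi>. b = \<pi> @ tl a)"

lemma valid_lift: "valid a b \<Longrightarrow> valid (a @ s) (b @ s)"
  unfolding valid_def by auto

lemma valid_unlift: "valid (a @ s) (b @ s) \<Longrightarrow> a \<noteq> [] \<Longrightarrow> valid a b"
  unfolding valid_def by auto

lemma M_lift:
  assumes pd: "pushdown_tm n M" and v: "valid a b" and x: "x \<in> {1..n}" and y: "y \<in> {1..n}"
  shows "M (a @ s) (b @ s) x y = M a b x y"
proof -
  obtain p a' \<pi> where a: "a = p # a'" and b: "b = \<pi> @ a'" using v unfolding valid_def
    by (metis list.collapse list.sel(3))
  have "M (p # (a' @ s)) (\<pi> @ (a' @ s)) x y = M [p] \<pi> x y" using pd x y unfolding pushdown_tm_def by blast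
  moreover have "M (p # a') (\<pi> @ a') x y = M [p] \<pi> x y" using pd x y unfolding pushdown_tm_def by blast
  ultimately show ?thesis using a b by simp
qed

lemma M_invalid:
  assumes pd: "pushdown_tm n M" and v: "\<not> valid a b" and x: "x \<in> {1..n}" and y: "y \<in> {1..n}"
  shows "M a b x y = 0"
proof -
  have "\<nexists>p \<pi> \<pi>'. a = p # \<pi>' \<and> b = \<pi> @ \<pi>'" using v unfolding valid_def by auto
  then show ?thesis using pd x y unfolding pushdown_tm_def by blast
qed

definition lift :: "'g list \<Rightarrow> 'g vx \<Rightarrow> 'g vx" where
  "lift s v = (fst v @ s, snd v)"

definition unl :: "'g list \<Rightarrow> 'g vx \<Rightarrow> 'g vx" where
  "unl s v = (take (length (fst v) - length s) (fst v), snd v)"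

lemma unl_app: "fst v = \<beta> @ s \<Longrightarrow> unl s v = (\<beta>, snd v)"
  unfolding unl_def by simp

lemma lift_unl: "fst v = \<beta> @ s \<Longrightarrow> lift s (unl s v) = v"
  unfolding unl_def lift_def by (cases v) simp

lemma unl_lift: "unl s (lift s v) = v"
  unfolding unl_def lift_def by simp

definition vp :: "'g vx \<Rightarrow> 'g vx list \<Rightarrow> bool" where
  "vp v xs \<longleftrightarrow> (\<forall>t<length xs. valid (fst ((v # xs) ! t)) (fst ((v # xs) ! Suc t)))"

lemma vp_Nil[simp]: "vp v []" by (simp add: vp_def)

lemma vp_Cons[simp]: "vp v (x # xs) \<longleftrightarrow> valid (fst v) (fst x) \<and> vp x xs"
  unfolding vp_def by (auto simp: less_Suc_eq_0_disj)

definition av :: "'g vx \<Rightarrow> (nat \<Rightarrow> 'g vx) \<Rightarrow> bool" where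
  "av v q \<longleftrightarrow> (\<forall>t. valid (fst (vtx v q t)) (fst (vtx v q (Suc t))))"

definition cat :: "'g vx list \<Rightarrow> (nat \<Rightarrow> 'g vx) \<Rightarrow> nat \<Rightarrow> 'g vx" where
  "cat ys r t = (if t < length ys then ys ! t else r (t - length ys))"

lemma vtx_cat_le: "t \<le> length ys \<Longrightarrow> vtx v (cat ys r) t = (v # ys) ! t"
  unfolding vtx_def cat_def by (cases t) auto

lemma vtx_cat_ge: "vtx v (cat ys r) (t + length ys) = vtx (last (v # ys)) r t"
  unfolding vtx_def cat_def
  by (cases t; cases ys rule: rev_cases) (auto simp: nth_append)

lemma wt_prod: "prod_list (map (\<lambda>t. ew M ((v # ys) ! t) ((v # ys) ! Suc t)) [0..<length ys]) = wt M v ys"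
proof (induction ys arbitrary: v)
  case Nil then show ?case by simp
next
  case (Cons x ys)
  have "[0..<length (x # ys)] = 0 # map Suc [0..<length ys]"
    by (simp only: length_Cons upt_conv_Cons[OF zero_less_Suc] map_Suc_upt)
  then show ?case using Cons[of x] by (simp add: comp_def)
qed

lemma W_cat:
  assumes ssp: "complete_ssp SigS SigV smult iprod"
  shows "W iprod M v (cat ys r) = smult (wt M v ys) (W iprod M (last (v # ys)) r)"
proof -
  define s where "s = (\<lambda>t. ew M (vtx v (cat ys r) t) (vtx v (cat ys r) (Suc t)))"
  have "W iprod M v (cat ys r) = smult (prod_list (map s [0..<length ys])) (iprod (\<lambda>t. s (t + length ys)))"
    unfolding W_def s_def[symmetric] by (rule iprod_factor[OF ssp])
  moreover have "prod_list (map s [0..<length ys]) = wt M v ys"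
  proof -
    have "map s [0..<length ys] = map (\<lambda>t. ew M ((v # ys) ! t) ((v # ys) ! Suc t)) [0..<length ys]"
      by (rule map_cong) (auto simp: s_def vtx_cat_le simp del: nth_Cons_Suc)
    then show ?thesis by (simp only: wt_prod)
  qed
  moreover have "(\<lambda>t. s (t + length ys)) = (\<lambda>t. ew M (vtx (last (v # ys)) r t) (vtx (last (v # ys)) r (Suc t)))"
    using vtx_cat_ge[of v ys r] by (auto simp: s_def fun_eq_iff) (metis add_Suc vtx_cat_ge)
  ultimately show ?thesis unfolding W_def by (simp only:)
qed

lemma wt_zero:
  fixes M :: "'g list \<Rightarrow> 'g list \<Rightarrow> nat \<Rightarrow> nat \<Rightarrow> 'a::{semiring_0,monoid_mult}"
  assumes pd: "pushdown_tm n M"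
  shows "\<forall>x\<in>set (v # xs). snd x \<in> {1..n} \<Longrightarrow> \<not> vp v xs \<Longrightarrow> wt M v xs = 0"
proof (induction xs arbitrary: v)
  case Nil then show ?case by simp
next
  case (Cons x xs)
  show ?case
  proof (cases "valid (fst v) (fst x)")
    case True
    then show ?thesis using Cons by simp
  next
    case False
    then have "ew M v x = 0" unfolding ew_def using M_invalid[OF pd] Cons.prems by simp
    then show ?thesis by simp
  qed
qed

lemma wt_lift:
  assumes pd: "pushdown_tm n M"
  shows "\<forall>x\<in>set (v # xs). snd x \<in> {1..n} \<Longrightarrow> vp v xs \<Longrightarrow> wt M (lift s v) (map (lift s) xs) = wt M v xs"
proof (induction xs arbitrary: v)
  case Nil then show ?case by simp
next
  case (Cons x xs)
  have "ew M (lift s v) (lift s x) = ew M v x"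
    unfolding ew_def lift_def using M_lift[OF pd] Cons.prems by simp
  then show ?case using Cons by simp
qed

lemma vp_lift: "vp v xs \<Longrightarrow> vp (lift s v) (map (lift s) xs)"
  by (induction xs arbitrary: v) (auto simp: lift_def valid_lift)

lemma vtx_lift: "vtx (lift s v) (lift s \<circ> q) t = lift s (vtx v q t)"
  unfolding vtx_def by simp

lemma W_zero:
  assumes ssp: "complete_ssp SigS SigV smult iprod" and pd: "pushdown_tm n M"
    and sv: "snd v \<in> {1..n}" and sq: "\<forall>t. snd (q t) \<in> {1..n}" and nv: "\<not> av v q"
  shows "W iprod M v q = 0"
proof -
  obtain t where t: "\<not> valid (fst (vtx v q t)) (fst (vtx v q (Suc t)))" using nv unfolding av_def by auto
  have st: "snd (vtx v q u) \<in> {1..n}" for u using sv sq unfolding vtx_def by auto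
  show ?thesis unfolding W_def
    by (rule iprod_zero[OF ssp, of _ t]) (simp add: ew_def M_invalid[OF pd t st st])
qed

lemma W_lift:
  assumes pd: "pushdown_tm n M"
    and sv: "snd v \<in> {1..n}" and sq: "\<forall>t. snd (q t) \<in> {1..n}" and a: "av v q"
  shows "W iprod M (lift s v) (lift s \<circ> q) = W iprod M v q"
proof -
  have st: "snd (vtx v q u) \<in> {1..n}" for u using sv sq unfolding vtx_def by auto
  have "ew M (vtx (lift s v) (lift s \<circ> q) t) (vtx (lift s v) (lift s \<circ> q) (Suc t)) = ew M (vtx v q t) (vtx v q (Suc t))" for t
    unfolding vtx_lift unfolding ew_def lift_def using M_lift[OF pd _ st st] a unfolding av_def by simp
  then show ?thesis unfolding W_def by simp
qed

lemma av_lift: "av v q \<Longrightarrow> av (lift s v) (lift s \<circ> q)"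
  unfolding av_def vtx_lift by (simp add: lift_def valid_lift)

lemma infinite_shift: "infinite {t. Pr (t + c)} \<longleftrightarrow> infinite {t::nat. Pr t}"
  unfolding infinite_nat_iff_unbounded
proof (intro iffI allI)
  fix m assume h: "\<forall>m. \<exists>n>m. n \<in> {t. Pr (t + c)}"
  then obtain x where "x > m" "Pr (x + c)" by auto
  then show "\<exists>n>m. n \<in> {t. Pr t}" by (intro exI[of _ "x + c"]) auto
next
  fix m assume h: "\<forall>m. \<exists>n>m. n \<in> {t. Pr t}"
  then obtain x where "x > m + c" "Pr x" by blast
  then show "\<exists>n>m. n \<in> {t. Pr (t + c)}" by (intro exI[of _ "x - c"]) auto
qed

lemma argmin_ex: "\<exists>t::nat. \<forall>t'. (L::nat \<Rightarrow> nat) t \<le> L t'"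
proof -
  define \<mu> where "\<mu> = (LEAST x. \<exists>t. L t = x)"
  have "\<exists>t. L t = \<mu>" unfolding \<mu>_def by (rule LeastI_ex) auto
  moreover have "\<mu> \<le> L t'" for t' unfolding \<mu>_def by (rule Least_le) auto
  ultimately show ?thesis by auto
qed

lemma suffix_persist:
  assumes v: "\<And>t. valid (\<sigma> t) (\<sigma> (Suc t))" and a: "\<sigma> t0 = \<alpha> @ s"
    and L: "\<And>t'. t0 \<le> t' \<Longrightarrow> t' < t0 + d \<Longrightarrow> length (\<sigma> t') > length s"
  shows "\<exists>\<beta>. \<sigma> (t0 + d) = \<beta> @ s"
  using L
proof (induction d)
  case 0 then show ?case using a by auto
next
  case (Suc d)
  then obtain \<beta> where b: "\<sigma> (t0 + d) = \<beta> @ s" by auto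
  have "length (\<sigma> (t0 + d)) > length s" using Suc.prems by auto
  then have "\<beta> \<noteq> []" using b by auto
  moreover obtain \<pi> where "\<sigma> (Suc (t0 + d)) = \<pi> @ tl (\<sigma> (t0 + d))" using v unfolding valid_def by blast
  ultimately show ?case using b by (intro exI[of _ "\<pi> @ tl \<beta>"]) auto
qed




lemma Pstar_states:
  assumes "xs \<in> Pstar n v (\<pi>, m)" "m \<in> {1..n}"
  shows "\<forall>x\<in>set (v # xs). snd x \<in> {1..n}"
proof
  fix x assume x: "x \<in> set (v # xs)"
  have e: "v # xs = butlast (v#xs) @ [last (v#xs)]" by (rule append_butlast_last_id[symmetric]) simp
  have "x \<in> set (butlast (v#xs) @ [last (v#xs)])" using x e by metis
  then show "snd x \<in> {1..n}" using assms by (auto simp: Pstar_def)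
qed

lemma vp_nth: "vp v xs \<Longrightarrow> t < length xs \<Longrightarrow> valid (fst ((v # xs) ! t)) (fst ((v # xs) ! Suc t))"
  unfolding vp_def by blast

lemma last_nth_len: "last (a # xs) = (a # xs) ! length xs"
  by (induction xs arbitrary: a) auto

lemma valid_ne: "valid a b \<Longrightarrow> a \<noteq> []"
  unfolding valid_def by blast

locale PD =
  fixes n :: nat and M :: "'g list \<Rightarrow> 'g list \<Rightarrow> nat \<Rightarrow> nat \<Rightarrow> 'a::{semiring_0,monoid_mult}"
    and ps :: "'g list" and i l :: nat
  assumes pd: "pushdown_tm n M" and psne: "ps \<noteq> []" and ii: "i \<in> {1..n}"
begin

definition T :: "(nat \<times> nat \<times> 'g vx list \<times> (nat \<Rightarrow> 'g vx)) set" where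
  "T = {(j, m, xs, q). j \<in> {1..length ps} \<and> m \<in> {1..n} \<and> xs \<in> Pstar n (take (j - 1) ps, i) ([], m) \<and> q \<in> Qset n l}"

definition G :: "(nat \<times> nat \<times> 'g vx list \<times> (nat \<Rightarrow> 'g vx)) set" where
  "G = {(j, m, xs, q). (j, m, xs, q) \<in> T \<and> vp (take (j - 1) ps, i) xs \<and> av ([ps ! (j - 1)], m) q}"

definition Qg :: "(nat \<Rightarrow> 'g vx) set" where
  "Qg = {q \<in> Qset n l. av (ps, i) q}"

definition phi :: "nat \<times> nat \<times> 'g vx list \<times> (nat \<Rightarrow> 'g vx) \<Rightarrow> nat \<Rightarrow> 'g vx" where
  "phi \<tau> = (case \<tau> of (j, m, xs, q) \<Rightarrow> cat (map (lift (drop (j - 1) ps)) xs) (lift (drop j ps) \<circ> q))"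

definition Lq :: "(nat \<Rightarrow> 'g vx) \<Rightarrow> nat \<Rightarrow> nat" where
  "Lq q t = length (fst (vtx (ps, i) q t))"

definition t0f :: "(nat \<Rightarrow> 'g vx) \<Rightarrow> nat" where
  "t0f q = (LEAST t. \<forall>t'. Lq q t \<le> Lq q t')"

definition jf :: "(nat \<Rightarrow> 'g vx) \<Rightarrow> nat" where
  "jf q = length ps + 1 - Lq q (t0f q)"

definition psi :: "(nat \<Rightarrow> 'g vx) \<Rightarrow> nat \<times> nat \<times> 'g vx list \<times> (nat \<Rightarrow> 'g vx)" where
  "psi q = (jf q, snd (vtx (ps, i) q (t0f q)), map (\<lambda>t. unl (drop (jf q - 1) ps) (q t)) [0..<t0f q],
            \<lambda>t. unl (drop (jf q) ps) (q (t0f q + t)))"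

lemma drop_split:
  assumes j: "j \<in> {1..length ps}"
  shows "drop (j - 1) ps = ps ! (j - 1) # drop j ps"
    "length (drop (j - 1) ps) = length ps - (j - 1)" "length (drop j ps) = length ps - j"
    "lift (drop (j - 1) ps) (take (j - 1) ps, i) = (ps, i)"
    "lift (drop j ps) ([ps ! (j - 1)], m) = (drop (j - 1) ps, m)"
proof -
  have jl: "j - 1 < length ps" using j by auto
  show 1: "drop (j - 1) ps = ps ! (j - 1) # drop j ps" using Cons_nth_drop_Suc[OF jl] j by simp
  show "length (drop (j - 1) ps) = length ps - (j - 1)" by simp
  show "length (drop j ps) = length ps - j" by simp
  show "lift (drop (j - 1) ps) (take (j - 1) ps, i) = (ps, i)" by (simp add: lift_def)
  show "lift (drop j ps) ([ps ! (j - 1)], m) = (drop (j - 1) ps, m)" using 1 by (simp add: lift_def)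
qed

context
  fixes j m xs q
  assumes tG: "(j, m, xs, q) \<in> G"
begin

lemma tG_facts:
  shows "j \<in> {1..length ps}" "m \<in> {1..n}" "xs \<in> Pstar n (take (j - 1) ps, i) ([], m)" "q \<in> Qset n l"
    "vp (take (j - 1) ps, i) xs" "av ([ps ! (j - 1)], m) q"
  using tG by (auto simp: G_def T_def)

lemma st0: "\<forall>x\<in>set ((take (j - 1) ps, i) # xs). snd x \<in> {1..n}"
  using Pstar_states[OF tG_facts(3) tG_facts(2)] .

lemma last0: "last ((take (j - 1) ps, i) # xs) = ([], m)"
  using tG_facts(3) by (simp add: Pstar_def)

lemma phi_a: "t \<le> length xs \<Longrightarrow> vtx (ps, i) (phi (j, m, xs, q)) t = lift (drop (j - 1) ps) (((take (j - 1) ps, i) # xs) ! t)"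
proof -
  assume t: "t \<le> length xs"
  have e: "(ps, i) # map (lift (drop (j - 1) ps)) xs = map (lift (drop (j - 1) ps)) ((take (j - 1) ps, i) # xs)"
    using drop_split(4)[OF tG_facts(1)] by simp
  have "vtx (ps, i) (phi (j, m, xs, q)) t = ((ps, i) # map (lift (drop (j - 1) ps)) xs) ! t"
    unfolding phi_def prod.case using t by (simp only: vtx_cat_le length_map)
  also have "\<dots> = map (lift (drop (j - 1) ps)) ((take (j - 1) ps, i) # xs) ! t" by (simp only: e)
  also have "\<dots> = lift (drop (j - 1) ps) (((take (j - 1) ps, i) # xs) ! t)" by (rule nth_map) (use t in simp)
  finally show ?thesis .
qed

lemma phi_last: "last ((ps, i) # map (lift (drop (j - 1) ps)) xs) = lift (drop j ps) ([ps ! (j - 1)], m)"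
proof -
  have e: "(ps, i) # map (lift (drop (j - 1) ps)) xs = map (lift (drop (j - 1) ps)) ((take (j - 1) ps, i) # xs)"
    using drop_split(4)[OF tG_facts(1)] by simp
  have lm: "last (map (lift (drop (j - 1) ps)) ((take (j - 1) ps, i) # xs)) = lift (drop (j - 1) ps) (last ((take (j - 1) ps, i) # xs))"
    by (rule last_map) simp
  show ?thesis unfolding e lm last0
    using drop_split(5)[OF tG_facts(1)] by (simp add: lift_def)
qed

lemma phi_b: "vtx (ps, i) (phi (j, m, xs, q)) (t + length xs) = lift (drop j ps) (vtx ([ps ! (j - 1)], m) q t)"
proof -
  have "vtx (ps, i) (phi (j, m, xs, q)) (t + length xs) =
        vtx (last ((ps, i) # map (lift (drop (j - 1) ps)) xs)) (lift (drop j ps) \<circ> q) t"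
    unfolding phi_def using vtx_cat_ge[of "(ps, i)" "map (lift (drop (j - 1) ps)) xs"] by simp
  then show ?thesis unfolding phi_last vtx_lift .
qed

lemma phi_c: "phi (j, m, xs, q) t = (if t < length xs then lift (drop (j - 1) ps) (xs ! t) else lift (drop j ps) (q (t - length xs)))"
  unfolding phi_def cat_def by simp

lemma K1: "phi (j, m, xs, q) \<in> Qg"
proof -
  let ?q = "phi (j, m, xs, q)"
  have sq: "\<forall>t. snd (q t) \<in> {1..n}" and iq: "infinite {t. snd (q t) \<le> l}" using tG_facts(4) by (auto simp: Qset_def)
  have s1: "snd (?q t) \<in> {1..n}" for t
  proof (cases "t < length xs")
    case True
    then have "xs ! t \<in> set ((take (j - 1) ps, i) # xs)" by simp
    then show ?thesis using True st0 by (simp add: phi_c lift_def)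
  next
    case False then show ?thesis using sq by (simp add: phi_c lift_def)
  qed
  have "{t. snd (?q (t + length xs)) \<le> l} = {t. snd (q t) \<le> l}" by (simp add: phi_c lift_def)
  then have "infinite {t. snd (?q t) \<le> l}" using iq infinite_shift[of "\<lambda>t. snd (?q t) \<le> l" "length xs"] by simp
  moreover have "av (ps, i) ?q" unfolding av_def
  proof
    fix t show "valid (fst (vtx (ps, i) ?q t)) (fst (vtx (ps, i) ?q (Suc t)))"
    proof (cases "t < length xs")
      case True
      have "valid (fst (((take (j - 1) ps, i) # xs) ! t)) (fst (((take (j - 1) ps, i) # xs) ! Suc t))"
        by (rule vp_nth[OF tG_facts(5) True])
      then show ?thesis using True phi_a[of t] phi_a[of "Suc t"] by (simp add: lift_def valid_lift)
    next
      case False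
      then obtain u where u: "t = u + length xs" by (metis add.commute le_Suc_ex not_less)
      have "valid (fst (vtx ([ps ! (j - 1)], m) q u)) (fst (vtx ([ps ! (j - 1)], m) q (Suc u)))"
        using tG_facts(6) unfolding av_def by blast
      then show ?thesis using phi_b[of u] phi_b[of "Suc u"] u by (simp add: lift_def valid_lift)
    qed
  qed
  ultimately show ?thesis using s1 by (simp add: Qg_def Qset_def)
qed

lemma K2:
  assumes ssp: "complete_ssp SigS SigV smult iprod"
  shows "W iprod M (ps, i) (phi (j, m, xs, q)) = smult (wt M (take (j - 1) ps, i) xs) (W iprod M ([ps ! (j - 1)], m) q)"
proof -
  have "W iprod M (ps, i) (phi (j, m, xs, q)) = smult (wt M (ps, i) (map (lift (drop (j - 1) ps)) xs))
        (W iprod M (last ((ps, i) # map (lift (drop (j - 1) ps)) xs)) (lift (drop j ps) \<circ> q))"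
    unfolding phi_def by (simp add: W_cat[OF ssp])
  moreover have "wt M (ps, i) (map (lift (drop (j - 1) ps)) xs) = wt M (take (j - 1) ps, i) xs"
    using wt_lift[OF pd st0 tG_facts(5), of "drop (j - 1) ps"] drop_split(4)[OF tG_facts(1)] by simp
  moreover have "W iprod M (lift (drop j ps) ([ps ! (j - 1)], m)) (lift (drop j ps) \<circ> q) = W iprod M ([ps ! (j - 1)], m) q"
    by (rule W_lift[OF pd]) (use tG_facts in \<open>auto simp: Qset_def\<close>)
  ultimately show ?thesis unfolding phi_last by simp
qed

lemma K3: "psi (phi (j, m, xs, q)) = (j, m, xs, q)"
proof -
  let ?q = "phi (j, m, xs, q)"
  let ?k = "length ps"
  have j: "j \<in> {1..?k}" using tG_facts(1) .
  have L1: "Lq ?q t > ?k - (j - 1)" if "t < length xs" for t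
  proof -
    have "fst (((take (j - 1) ps, i) # xs) ! t) \<noteq> []" using vp_nth[OF tG_facts(5) that] valid_ne by blast
    then show ?thesis using phi_a[of t] that drop_split(2)[OF j] by (simp add: Lq_def lift_def)
  qed
  have L2: "Lq ?q (length xs) = ?k - (j - 1)"
  proof -
    have "((take (j - 1) ps, i) # xs) ! length xs = ([], m)" using last0 last_nth_len by metis
    then show ?thesis using phi_a[of "length xs"] drop_split(2)[OF j] by (simp add: Lq_def lift_def)
  qed
  have L3: "Lq ?q (u + length xs) \<ge> ?k - (j - 1)" for u
  proof -
    have "fst (vtx ([ps ! (j - 1)], m) q u) \<noteq> []" using tG_facts(6) valid_ne unfolding av_def by blast
    then have "length (fst (vtx ([ps ! (j - 1)], m) q u)) \<ge> 1" by (cases "fst (vtx ([ps ! (j - 1)], m) q u)") auto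
    then show ?thesis using phi_b[of u] drop_split(3)[OF j] j by (simp add: Lq_def lift_def)
  qed
  have min: "\<forall>t'. Lq ?q (length xs) \<le> Lq ?q t'"
  proof
    fix t'
    show "Lq ?q (length xs) \<le> Lq ?q t'"
    proof (cases "t' < length xs")
      case True then show ?thesis using L1 L2 by fastforce
    next
      case False
      then obtain u where "t' = u + length xs" by (metis add.commute le_Suc_ex not_less)
      then show ?thesis using L2 L3 by simp
    qed
  qed
  have t0: "t0f ?q = length xs" unfolding t0f_def
  proof (rule Least_equality)
    show "\<forall>t'. Lq ?q (length xs) \<le> Lq ?q t'" by (rule min)
  next
    fix y assume y: "\<forall>t'. Lq ?q y \<le> Lq ?q t'"
    show "length xs \<le> y"
    proof (rule ccontr)
      assume "\<not> length xs \<le> y"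
      then have "Lq ?q y > Lq ?q (length xs)" using L1 L2 by simp
      then show False using y by (meson not_le)
    qed
  qed
  have jj: "jf ?q = j" unfolding jf_def t0 L2 using j by auto
  have mm: "snd (vtx (ps, i) ?q (t0f ?q)) = m"
  proof -
    have "((take (j - 1) ps, i) # xs) ! length xs = ([], m)" using last0 last_nth_len by metis
    then show ?thesis using phi_a[of "length xs"] t0 by (simp add: lift_def)
  qed
  have xx: "map (\<lambda>t. unl (drop (j - 1) ps) (?q t)) [0..<length xs] = xs"
  proof (rule nth_equalityI)
    show "length (map (\<lambda>t. unl (drop (j - 1) ps) (?q t)) [0..<length xs]) = length xs" by simp
  next
    fix t assume "t < length (map (\<lambda>t. unl (drop (j - 1) ps) (?q t)) [0..<length xs])"
    then have t: "t < length xs" by simp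
    show "map (\<lambda>t. unl (drop (j - 1) ps) (?q t)) [0..<length xs] ! t = xs ! t"
      using t by (simp add: phi_c unl_lift)
  qed
  have qq: "(\<lambda>t. unl (drop j ps) (?q (length xs + t))) = q"
    by (rule ext) (simp add: phi_c unl_lift)
  show ?thesis unfolding psi_def jj mm unfolding t0 xx qq ..
qed

end

end




context PD
begin

context
  fixes q
  assumes qQ: "q \<in> Qg"
begin

lemma q_facts: "\<forall>t. snd (q t) \<in> {1..n}" "infinite {t. snd (q t) \<le> l}" "av (ps, i) q"
  using qQ by (auto simp: Qg_def Qset_def)

abbreviation "\<sigma> t \<equiv> fst (vtx (ps, i) q t)"

lemma sv: "valid (\<sigma> t) (\<sigma> (Suc t))"
  using q_facts(3) unfolding av_def by blast

lemma Lpos: "Lq q t \<ge> 1"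
proof -
  have "\<sigma> t \<noteq> []" using sv valid_ne by blast
  then show ?thesis unfolding Lq_def by (cases "\<sigma> t") auto
qed

lemma t0min: "\<forall>t'. Lq q (t0f q) \<le> Lq q t'"
  unfolding t0f_def by (rule LeastI_ex) (rule argmin_ex)

lemma t0less: "t < t0f q \<Longrightarrow> Lq q t > Lq q (t0f q)"
proof -
  assume t: "t < t0f q"
  then have "\<not> (\<forall>t'. Lq q t \<le> Lq q t')" unfolding t0f_def by (rule not_less_Least)
  then obtain t' where "Lq q t' < Lq q t" by (meson not_le)
  then show ?thesis using t0min by (meson le_less_trans)
qed

lemma L0: "Lq q 0 = length ps" unfolding Lq_def vtx_def by simp

lemma j_range: "jf q \<in> {1..length ps}"
proof -
  have "Lq q (t0f q) \<le> length ps" using t0min L0 by metis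
  moreover have "Lq q (t0f q) \<ge> 1" by (rule Lpos)
  ultimately show ?thesis unfolding jf_def by auto
qed

lemma len_s1: "length (drop (jf q - 1) ps) = Lq q (t0f q)"
proof -
  have "Lq q (t0f q) \<le> length ps" using t0min L0 by metis
  moreover have "Lq q (t0f q) \<ge> 1" by (rule Lpos)
  ultimately show ?thesis unfolding jf_def by auto
qed

lemma len_s2: "length (drop (jf q) ps) = Lq q (t0f q) - 1"
  using len_s1 j_range by (simp add: drop_split(2,3))

lemma pre_suffix: "d \<le> t0f q \<Longrightarrow> \<exists>\<beta>. \<sigma> d = \<beta> @ drop (jf q - 1) ps"
proof -
  assume d: "d \<le> t0f q"
  have "\<exists>\<beta>. \<sigma> (0 + d) = \<beta> @ drop (jf q - 1) ps"
  proof (rule suffix_persist[where \<sigma> = "\<lambda>t. \<sigma> t"])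
    show "\<And>t. valid (\<sigma> t) (\<sigma> (Suc t))" by (rule sv)
    show "\<sigma> 0 = take (jf q - 1) ps @ drop (jf q - 1) ps" by (simp add: vtx_def)
    fix t' assume "0 \<le> t'" "t' < 0 + d"
    then have "Lq q t' > Lq q (t0f q)" using d t0less by simp
    then show "length (drop (jf q - 1) ps) < length (\<sigma> t')" using len_s1 unfolding Lq_def by simp
  qed
  then show ?thesis by simp
qed

lemma at_t0: "\<sigma> (t0f q) = drop (jf q - 1) ps"
proof -
  obtain \<beta> where b: "\<sigma> (t0f q) = \<beta> @ drop (jf q - 1) ps" using pre_suffix by blast
  then have "length \<beta> = 0" using len_s1 unfolding Lq_def by simp
  then show ?thesis using b by simp
qed

lemma pre_suffix_ne: "d < t0f q \<Longrightarrow> \<sigma> d = \<beta> @ drop (jf q - 1) ps \<Longrightarrow> \<beta> \<noteq> []"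
proof -
  assume d: "d < t0f q" and b: "\<sigma> d = \<beta> @ drop (jf q - 1) ps"
  have "Lq q d > Lq q (t0f q)" using d t0less by simp
  then show ?thesis using b len_s1 unfolding Lq_def by auto
qed

lemma post_suffix: "\<exists>\<beta>. \<sigma> (t0f q + d) = \<beta> @ drop (jf q) ps \<and> \<beta> \<noteq> []"
proof -
  have "\<exists>\<beta>. \<sigma> (t0f q + d) = \<beta> @ drop (jf q) ps"
  proof (rule suffix_persist[where \<sigma> = "\<lambda>t. \<sigma> t"])
    show "\<And>t. valid (\<sigma> t) (\<sigma> (Suc t))" by (rule sv)
    show "\<sigma> (t0f q) = [ps ! (jf q - 1)] @ drop (jf q) ps" using at_t0 drop_split(1)[OF j_range] by simp
    fix t' assume "t0f q \<le> t'" "t' < t0f q + d"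
    have "Lq q t' \<ge> Lq q (t0f q)" using t0min by blast
    then show "length (drop (jf q) ps) < length (\<sigma> t')" using len_s2 Lpos[of "t0f q"] unfolding Lq_def by simp
  qed
  then obtain \<beta> where b: "\<sigma> (t0f q + d) = \<beta> @ drop (jf q) ps" by blast
  have "Lq q (t0f q + d) \<ge> Lq q (t0f q)" using t0min by blast
  then have "\<beta> \<noteq> []" using b len_s2 Lpos[of "t0f q"] unfolding Lq_def by auto
  then show ?thesis using b by blast
qed

lemma xs_nth: "t \<le> t0f q \<Longrightarrow> ((take (jf q - 1) ps, i) # map (\<lambda>t. unl (drop (jf q - 1) ps) (q t)) [0..<t0f q]) ! t
   = unl (drop (jf q - 1) ps) (vtx (ps, i) q t)"
proof (cases t)
  case 0
  have "unl (drop (jf q - 1) ps) (ps, i) = (take (jf q - 1) ps, i)"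
    using unl_app[of "(ps, i)" "take (jf q - 1) ps" "drop (jf q - 1) ps"] by simp
  then show ?thesis using 0 by (simp add: vtx_def)
next
  case (Suc t')
  assume "t \<le> t0f q"
  then show ?thesis using Suc by (simp add: vtx_def)
qed

lemma r_vtx: "vtx ([ps ! (jf q - 1)], snd (vtx (ps, i) q (t0f q))) (\<lambda>t. unl (drop (jf q) ps) (q (t0f q + t))) t
   = unl (drop (jf q) ps) (vtx (ps, i) q (t0f q + t))"
proof (cases t)
  case 0
  have "fst (vtx (ps, i) q (t0f q)) = [ps ! (jf q - 1)] @ drop (jf q) ps" using at_t0 drop_split(1)[OF j_range] by simp
  then have "unl (drop (jf q) ps) (vtx (ps, i) q (t0f q)) = ([ps ! (jf q - 1)], snd (vtx (ps, i) q (t0f q)))"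
    by (simp add: unl_app)
  then show ?thesis using 0 by (simp add: vtx_def)
next
  case (Suc t')
  then show ?thesis by (simp add: vtx_def)
qed

lemma K4: "psi q \<in> G"
proof -
  define j where "j = jf q"
  define t0 where "t0 = t0f q"
  define m where "m = snd (vtx (ps, i) q t0)"
  define xs where "xs = map (\<lambda>t. unl (drop (j - 1) ps) (q t)) [0..<t0]"
  define r where "r = (\<lambda>t. unl (drop j ps) (q (t0 + t)))"
  have ps_eq: "psi q = (j, m, xs, r)" unfolding psi_def j_def t0_def m_def xs_def r_def ..
  have jr: "j \<in> {1..length ps}" unfolding j_def by (rule j_range)
  have stv: "snd (vtx (ps, i) q t) \<in> {1..n}" for t using ii q_facts(1) by (simp add: vtx_def)
  have mr: "m \<in> {1..n}" unfolding m_def by (rule stv)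
  have lenxs: "length xs = t0" unfolding xs_def by simp
  have nth: "((take (j - 1) ps, i) # xs) ! t = unl (drop (j - 1) ps) (vtx (ps, i) q t)" if "t \<le> t0" for t
    using xs_nth[of t] that unfolding j_def t0_def xs_def by simp
  have last: "last ((take (j - 1) ps, i) # xs) = ([], m)"
  proof -
    have "last ((take (j - 1) ps, i) # xs) = unl (drop (j - 1) ps) (vtx (ps, i) q t0)"
      by (simp only: last_nth_len lenxs nth[OF order_refl])
    also have "\<dots> = ([], m)" unfolding m_def
      using unl_app[of "vtx (ps, i) q t0" "[]" "drop (j - 1) ps"] by (simp add: at_t0 j_def t0_def)
    finally show ?thesis .
  qed
  have stxs: "\<forall>x\<in>set ((take (j - 1) ps, i) # xs). snd x \<in> {1..n}"
    using ii q_facts(1) by (auto simp: xs_def unl_def)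
  have xsP: "xs \<in> Pstar n (take (j - 1) ps, i) ([], m)"
    unfolding Pstar_def using last stxs by (auto dest: in_set_butlastD)
  have rvtx: "vtx ([ps ! (j - 1)], m) r t = unl (drop j ps) (vtx (ps, i) q (t0 + t))" for t
    using r_vtx[of t] unfolding j_def t0_def m_def r_def .
  have rQ: "r \<in> Qset n l"
  proof -
    have "\<forall>t. snd (r t) \<in> {1..n}" using q_facts(1) by (simp add: r_def unl_def)
    moreover have "infinite {t. snd (r t) \<le> l}"
    proof -
      have "{t. snd (r t) \<le> l} = {t. snd (q (t + t0)) \<le> l}" by (simp add: r_def unl_def add.commute)
      then show ?thesis using q_facts(2) infinite_shift[of "\<lambda>t. snd (q t) \<le> l" t0] by simp
    qed
    ultimately show ?thesis by (simp add: Qset_def)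
  qed
  have vpx: "vp (take (j - 1) ps, i) xs" unfolding vp_def
  proof (intro allI impI)
    fix t assume t: "t < length xs"
    obtain \<beta> where b: "\<sigma> t = \<beta> @ drop (j - 1) ps" using pre_suffix[of t] t lenxs unfolding j_def t0_def by auto
    obtain \<beta>' where b': "\<sigma> (Suc t) = \<beta>' @ drop (j - 1) ps" using pre_suffix[of "Suc t"] t lenxs unfolding j_def t0_def by auto
    have ne: "\<beta> \<noteq> []" using pre_suffix_ne[of t \<beta>] t lenxs b unfolding j_def t0_def by auto
    have "valid (\<beta> @ drop (j - 1) ps) (\<beta>' @ drop (j - 1) ps)" using sv[of t] b b' by simp
    then have "valid \<beta> \<beta>'" using ne by (rule valid_unlift)
    moreover have "((take (j - 1) ps, i) # xs) ! t = (\<beta>, snd (vtx (ps, i) q t))"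
      using nth[of t] t lenxs unl_app[of "vtx (ps, i) q t" \<beta> "drop (j - 1) ps"] b by simp
    moreover have "((take (j - 1) ps, i) # xs) ! Suc t = (\<beta>', snd (vtx (ps, i) q (Suc t)))"
      using nth[of "Suc t"] t lenxs unl_app[of "vtx (ps, i) q (Suc t)" \<beta>' "drop (j - 1) ps"] b' by simp
    ultimately show "valid (fst (((take (j - 1) ps, i) # xs) ! t)) (fst (((take (j - 1) ps, i) # xs) ! Suc t))" by simp
  qed
  have avr: "av ([ps ! (j - 1)], m) r" unfolding av_def
  proof
    fix t
    obtain \<beta> where b: "\<sigma> (t0 + t) = \<beta> @ drop j ps" "\<beta> \<noteq> []" using post_suffix[of t] unfolding j_def t0_def by auto
    obtain \<beta>' where b': "\<sigma> (t0 + Suc t) = \<beta>' @ drop j ps" using post_suffix[of "Suc t"] unfolding j_def t0_def by auto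
    have "valid (\<beta> @ drop j ps) (\<beta>' @ drop j ps)" using sv[of "t0 + t"] b b' by simp
    then have "valid \<beta> \<beta>'" using b(2) by (rule valid_unlift)
    moreover have "fst (vtx ([ps ! (j - 1)], m) r t) = \<beta>"
      using rvtx[of t] unl_app[of "vtx (ps, i) q (t0 + t)" \<beta> "drop j ps"] b by simp
    moreover have "fst (vtx ([ps ! (j - 1)], m) r (Suc t)) = \<beta>'"
      using rvtx[of "Suc t"] unl_app[of "vtx (ps, i) q (t0 + Suc t)" \<beta>' "drop j ps"] b' by simp
    ultimately show "valid (fst (vtx ([ps ! (j - 1)], m) r t)) (fst (vtx ([ps ! (j - 1)], m) r (Suc t)))" by simp
  qed
  show ?thesis unfolding ps_eq G_def T_def using jr mr xsP rQ vpx avr by simp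
qed

lemma K5: "phi (psi q) = q"
proof
  fix t
  define j where "j = jf q"
  define t0 where "t0 = t0f q"
  show "phi (psi q) t = q t"
  proof (cases "t < t0")
    case True
    obtain \<beta> where b: "\<sigma> (Suc t) = \<beta> @ drop (j - 1) ps" using pre_suffix[of "Suc t"] True unfolding j_def t0_def by auto
    then have "fst (q t) = \<beta> @ drop (j - 1) ps" by (simp add: vtx_def)
    then have "lift (drop (j - 1) ps) (unl (drop (j - 1) ps) (q t)) = q t" by (rule lift_unl)
    then show ?thesis using True unfolding psi_def phi_def cat_def j_def t0_def by simp
  next
    case False
    then obtain d where d: "t = t0 + d" by (metis le_Suc_ex not_less)
    obtain \<beta> where b: "\<sigma> (t0 + Suc d) = \<beta> @ drop j ps" using post_suffix[of "Suc d"] unfolding j_def t0_def by auto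
    then have "fst (q t) = \<beta> @ drop j ps" using d by (simp add: vtx_def)
    then have "lift (drop j ps) (unl (drop j ps) (q t)) = q t" by (rule lift_unl)
    then show ?thesis using False d unfolding psi_def phi_def cat_def j_def t0_def by simp
  qed
qed

end

end




definition encT :: "nat \<times> nat \<times> ('g::countable) vx list \<times> (nat \<Rightarrow> 'g vx) \<Rightarrow> idx" where
  "encT \<tau> = (case \<tau> of (j, m, xs, q) \<Rightarrow> (\<lambda>t. case t of 0 \<Rightarrow> to_nat (j, m, xs) | Suc t' \<Rightarrow> to_nat (q t')))"

lemma inj_encT: "inj_on encT A"
proof (rule inj_onI)
  fix x y :: "nat \<times> nat \<times> ('g::countable) vx list \<times> (nat \<Rightarrow> 'g vx)"
  assume e: "encT x = encT y"
  obtain j m xs q where x: "x = (j, m, xs, q)" by (cases x) auto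
  obtain j' m' xs' q' where y: "y = (j', m', xs', q')" by (cases y) auto
  have "encT x 0 = encT y 0" using e by simp
  then have 1: "(j, m, xs) = (j', m', xs')" using x y by (simp add: encT_def)
  have "encT x (Suc t) = encT y (Suc t)" for t using e by simp
  then have "q t = q' t" for t using x y by (simp add: encT_def)
  then show "x = y" using x y 1 by auto
qed

context PD
begin

lemma Z1:
  assumes ssp: "complete_ssp SigS SigV smult iprod" and tT: "(j, m, xs, q) \<in> T" and nG: "(j, m, xs, q) \<notin> G"
  shows "smult (wt M (take (j - 1) ps, i) xs) (W iprod M ([ps ! (j - 1)], m) q) = 0"
proof -
  have f: "j \<in> {1..length ps}" "m \<in> {1..n}" "xs \<in> Pstar n (take (j - 1) ps, i) ([], m)" "q \<in> Qset n l"
    using tT by (auto simp: T_def)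
  have "\<not> vp (take (j - 1) ps, i) xs \<or> \<not> av ([ps ! (j - 1)], m) q" using tT nG by (auto simp: G_def)
  then show ?thesis
  proof
    assume "\<not> vp (take (j - 1) ps, i) xs"
    then have "wt M (take (j - 1) ps, i) xs = 0" using wt_zero[OF pd Pstar_states[OF f(3) f(2)]] by blast
    then show ?thesis using ssp_parts(7)[OF ssp] by simp
  next
    assume "\<not> av ([ps ! (j - 1)], m) q"
    then have "W iprod M ([ps ! (j - 1)], m) q = 0"
      by (intro W_zero[OF ssp pd]) (use f in \<open>auto simp: Qset_def\<close>)
    then show ?thesis using ssp_parts(8)[OF ssp] by simp
  qed
qed

lemma Z2:
  assumes ssp: "complete_ssp SigS SigV smult iprod" and q: "q \<in> Qset n l - Qg"
  shows "W iprod M (ps, i) q = 0"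
  by (rule W_zero[OF ssp pd]) (use q ii in \<open>auto simp: Qset_def Qg_def\<close>)

lemma inj_phi: "inj_on phi G"
  by (rule inj_on_inverseI[where g = psi]) (auto intro: K3)

lemma phi_image: "phi ` G = Qg"
proof
  show "phi ` G \<subseteq> Qg" using K1 by auto
next
  show "Qg \<subseteq> phi ` G"
  proof
    fix q assume "q \<in> Qg"
    then have "psi q \<in> G" "phi (psi q) = q" using K4 K5 by auto
    then show "q \<in> phi ` G" by (metis image_eqI)
  qed
qed

end




theorem lemma5:
  fixes SigS :: "(idx \<Rightarrow> 'a::{semiring_0,monoid_mult}) \<Rightarrow> idx set \<Rightarrow> 'a"
    and SigV :: "(idx \<Rightarrow> 'v::comm_monoid_add) \<Rightarrow> idx set \<Rightarrow> 'v"
    and smult :: "'a \<Rightarrow> 'v \<Rightarrow> 'v"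
    and iprod :: "(nat \<Rightarrow> 'a) \<Rightarrow> 'v"
    and n :: nat
    and M :: "'g::finite list \<Rightarrow> 'g list \<Rightarrow> nat \<Rightarrow> nat \<Rightarrow> 'a"
    and ps :: "'g list"
    and l i :: nat
  assumes "complete_ssp SigS SigV smult iprod"
    and "n \<ge> 1"
    and "pushdown_tm n M"
    and "length ps \<ge> 1"
    and "l \<le> n"
    and "i \<in> {1..n}"
  shows "omega_l SigV iprod n M l ps i =
    (\<Sum>j\<in>{1..length ps}. \<Sum>m\<in>{1..n}.
       smult (mat_star SigS n M (take (j - 1) ps) [] i m) (omega_l SigV iprod n M l [ps ! (j - 1)] m))"
proof -
  note ssp = assms(1)
  have sr: "complete_semiring SigS" using ssp_D1[OF ssp] .
  have cmV: "complete_monoid SigV" using ssp_parts(2)[OF ssp] .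
  have psne: "ps \<noteq> []" using assms(4) by auto
  interpret PD n M ps i l using assms(3) psne assms(6) by unfold_locales
  define F where "F = (\<lambda>\<tau>. case \<tau> of (j, m, xs, q) \<Rightarrow>
     smult (wt M (take (j - 1) ps, i) xs) (W iprod M ([ps ! (j - 1)], m) q))"
  define Tjm where "Tjm = (\<lambda>j m. {(j', m', xs, q). j' = j \<and> m' = m \<and> xs \<in> Pstar n (take (j - 1) ps, i) ([], m) \<and> q \<in> (Qset n l :: (nat \<Rightarrow> 'g vx) set)})"
  have A: "smult (mat_star SigS n M (take (j - 1) ps) [] i m) (omega_l SigV iprod n M l [ps ! (j - 1)] m)
      = gsum SigV encT F (Tjm j m)" for j m
  proof -
    define X where "X = Pstar n (take (j - 1) ps, i) ([], m)"
    define Q where "Q = (Qset n l :: (nat \<Rightarrow> 'g vx) set)"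
    define h where "h = (\<lambda>(xs :: 'g vx list) (q :: nat \<Rightarrow> 'g vx). (j, m, xs, q))"
    have "smult (mat_star SigS n M (take (j - 1) ps) [] i m) (omega_l SigV iprod n M l [ps ! (j - 1)] m)
       = smult (gsum SigS encc (wt M (take (j - 1) ps, i)) X) (gsum SigV encs (W iprod M ([ps ! (j - 1)], m)) Q)"
      unfolding mat_star_paths[OF sr] omega_eq X_def Q_def ..
    also have "\<dots> = gsum SigV encc (\<lambda>xs. smult (wt M (take (j - 1) ps, i) xs) (gsum SigV encs (W iprod M ([ps ! (j - 1)], m)) Q)) X"
      unfolding gsum_def by (rule ssp_parts(10)[OF ssp])
    also have "\<dots> = gsum SigV encc (\<lambda>xs. gsum SigV encT F (h xs ` Q)) X"
    proof (rule gsum_cong[OF _ cmV])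
      fix xs assume "xs \<in> X"
      have "gsum SigV encT F (h xs ` Q) = gsum SigV (encT \<circ> h xs) (F \<circ> h xs) Q"
        by (rule gsum_reindex[OF cmV]) (auto simp: h_def inj_on_def inj_encT dest: inj_onD[OF inj_encT[of UNIV]])
      also have "\<dots> = gsum SigV encs (F \<circ> h xs) Q"
        by (rule gsum_enc[OF cmV comp_inj_on[OF _ inj_encT] inj_encs]) (auto simp: h_def inj_on_def)
      also have "\<dots> = gsum SigV encs (\<lambda>q. smult (wt M (take (j - 1) ps, i) xs) (W iprod M ([ps ! (j - 1)], m) q)) Q"
        by (rule gsum_cong[OF _ cmV]) (simp add: F_def h_def)
      also have "\<dots> = smult (wt M (take (j - 1) ps, i) xs) (gsum SigV encs (W iprod M ([ps ! (j - 1)], m)) Q)"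
        unfolding gsum_def by (rule ssp_parts(9)[OF ssp])
      finally show "smult (wt M (take (j - 1) ps, i) xs) (gsum SigV encs (W iprod M ([ps ! (j - 1)], m)) Q)
          = gsum SigV encT F (h xs ` Q)" ..
    qed
    also have "\<dots> = gsum SigV encT F (\<Union>xs\<in>X. h xs ` Q)"
      by (rule gsum_part[OF cmV]) (auto simp: inj_encc inj_encT h_def)
    also have "(\<Union>xs\<in>X. h xs ` Q) = Tjm j m"
      unfolding Tjm_def h_def X_def Q_def by auto
    finally show ?thesis .
  qed
  have B: "(\<Sum>j\<in>{1..length ps}. \<Sum>m\<in>{1..n}. gsum SigV encT F (Tjm j m)) = gsum SigV encT F T"
  proof -
    have "(\<Sum>j\<in>{1..length ps}. \<Sum>m\<in>{1..n}. gsum SigV encT F (Tjm j m))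
        = (\<Sum>(j, m)\<in>{1..length ps} \<times> {1..n}. gsum SigV encT F (Tjm j m))"
      by (rule sum.cartesian_product)
    also have "\<dots> = gsum SigV encc (\<lambda>(j, m). gsum SigV encT F (Tjm j m)) ({1..length ps} \<times> {1..n})"
      by (rule gsum_finite[OF cmV, symmetric]) (auto simp: inj_encc)
    also have "\<dots> = gsum SigV encc (\<lambda>u. gsum SigV encT F ((\<lambda>(j, m). Tjm j m) u)) ({1..length ps} \<times> {1..n})"
      by (rule gsum_cong[OF _ cmV]) auto
    also have "\<dots> = gsum SigV encT F (\<Union>u\<in>{1..length ps} \<times> {1..n}. (\<lambda>(j, m). Tjm j m) u)"
      by (rule gsum_part[OF cmV]) (auto simp: inj_encc inj_encT Tjm_def)
    also have "(\<Union>u\<in>{1..length ps} \<times> {1..n}. (\<lambda>(j, m). Tjm j m) u) = T"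
      unfolding Tjm_def T_def by auto
    finally show ?thesis .
  qed
  have C: "gsum SigV encT F T = gsum SigV encT F G"
  proof (rule gsum_subset[OF cmV])
    show "G \<subseteq> T" unfolding G_def by auto
    show "inj_on encT T" by (rule inj_encT)
    fix \<tau> assume t: "\<tau> \<in> T - G"
    obtain j m xs q where tt: "\<tau> = (j, m, xs, q)" by (cases \<tau>) auto
    show "F \<tau> = 0" using Z1[OF ssp, of j m xs q] t tt by (simp add: F_def)
  qed
  have D: "gsum SigV encT F G = gsum SigV encs (W iprod M (ps, i)) Qg"
  proof -
    have "gsum SigV encT F G = gsum SigV encT (W iprod M (ps, i) \<circ> phi) G"
    proof (rule gsum_cong[OF _ cmV])
      fix \<tau> assume t: "\<tau> \<in> G"
      obtain j m xs q where tt: "\<tau> = (j, m, xs, q)" by (cases \<tau>) auto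
      show "F \<tau> = (W iprod M (ps, i) \<circ> phi) \<tau>" using K2[OF t[unfolded tt] ssp] tt by (simp add: F_def)
    qed
    also have "\<dots> = gsum SigV (encs \<circ> phi) (W iprod M (ps, i) \<circ> phi) G"
      by (rule gsum_enc[OF cmV inj_encT]) (rule comp_inj_on[OF inj_phi inj_encs])
    also have "\<dots> = gsum SigV encs (W iprod M (ps, i)) (phi ` G)"
      by (rule gsum_reindex[OF cmV inj_phi inj_encs, symmetric])
    finally show ?thesis unfolding phi_image .
  qed
  have E: "gsum SigV encs (W iprod M (ps, i)) Qg = omega_l SigV iprod n M l ps i"
    unfolding omega_eq
    by (rule gsum_subset[OF cmV, symmetric]) (auto simp: Qg_def inj_encs Z2[OF ssp])
  show ?thesis unfolding A B C D E ..
qed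



end
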